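(* Let $\mathcal F=\{f_1,\dots,f_M\}$ be a frame for $\mathbb R^N$ with range of coefficients $W\subset\mathbb R^M$. Then $\mathbb M^{\mathcal F}$ is injective if and only if for every subset $S\subset\{1,\dots,M\}$: whenever $W\cap L^S\neq\{0\}$, one has $W\cap L^{S^\complement}=\{0\}$.
   Context: A frame for $\mathbb R^N$ is a spanning family $\{f_1,\dots,f_M\}$; $W=\{(\langle x,f_k\rangle)_{k=1}^M: x\in\mathbb R^N\}$. For $S\subset\{1,\dots,M\}$, $L^S=\{(a_1,\dots,a_M)\in\mathbb R^M: a_i=0 \text{ for all } i\in S\}$, and $S^\complement$ is the complement of $S$. $\mathbb M^{\mathcal F}:\mathbb R^N/\{\pm1\}\to\mathbb R^M$, $\hat x\mapsto(|\langle x,f_k\rangle|)_k$; injectivity means $|\langle x,f_k\rangle|=|\langle y,f_k\rangle|$ for all $k$ implies $y=\pm x$. *)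

theory Defs
  imports "HOL-Analysis.Analysis"
begin

text \<open>R^N is an abstract euclidean space 'a; R^M is modelled as functions
  nat \<Rightarrow> real supported on the index set {1..M}.\<close>

definition is_frame :: "(nat \<Rightarrow> 'a::euclidean_space) \<Rightarrow> nat \<Rightarrow> bool" where
  "is_frame f M \<longleftrightarrow> span (f ` {1..M}) = UNIV"

definition coeff_range :: "(nat \<Rightarrow> 'a::euclidean_space) \<Rightarrow> nat \<Rightarrow> (nat \<Rightarrow> real) set" where
  "coeff_range f M = {a. \<exists>x. a = (\<lambda>k. if k \<in> {1..M} then x \<bullet> f k else 0)}"

definition L_set :: "nat \<Rightarrow> nat set \<Rightarrow> (nat \<Rightarrow> real) set" where
  "L_set M S = {a. (\<forall>i. i \<notin> {1..M} \<longrightarrow> a i = 0) \<and> (\<forall>i\<in>S. a i = 0)}"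

definition phase_retrieval_injective :: "(nat \<Rightarrow> 'a::euclidean_space) \<Rightarrow> nat \<Rightarrow> bool" where
  "phase_retrieval_injective f M \<longleftrightarrow>
     (\<forall>x y. (\<forall>k\<in>{1..M}. \<bar>x \<bullet> f k\<bar> = \<bar>y \<bullet> f k\<bar>) \<longrightarrow> y = x \<or> y = - x)"

end

theory Submission
  imports Defs
begin

lemma frame_zero:
  assumes "is_frame f M" "\<forall>k\<in>{1..M}. x \<bullet> f k = 0"
  shows "x = 0"
proof -
  have "x \<in> span (f ` {1..M})" using assms(1) by (simp add: is_frame_def)
  moreover have "\<And>y. y \<in> f ` {1..M} \<Longrightarrow> orthogonal x y"
    using assms(2) by (auto simp: orthogonal_def)
  ultimately have "orthogonal x x" by (rule orthogonal_to_span)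
  thus ?thesis by (simp add: orthogonal_def)
qed

lemma mem_int:
  "a \<in> coeff_range f M \<inter> L_set M S \<longleftrightarrow>
   (\<exists>x. a = (\<lambda>k. if k \<in> {1..M} then x \<bullet> f k else 0) \<and> (\<forall>i\<in>S. a i = 0))"
  by (auto simp: coeff_range_def L_set_def)

lemma ne_zero_iff:
  "coeff_range f M \<inter> L_set M S \<noteq> {\<lambda>_. 0} \<longleftrightarrow>
   (\<exists>x. (\<exists>k\<in>{1..M}. x \<bullet> f k \<noteq> 0) \<and> (\<forall>i\<in>S \<inter> {1..M}. x \<bullet> f i = 0))"
proof
  assume h: "coeff_range f M \<inter> L_set M S \<noteq> {\<lambda>_. 0}"
  have z: "(\<lambda>_. 0) \<in> coeff_range f M \<inter> L_set M S"
    unfolding mem_int by (rule exI[of _ 0]) auto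
  then obtain a where a: "a \<in> coeff_range f M \<inter> L_set M S" "a \<noteq> (\<lambda>_. 0)"
    using h by blast
  then obtain x where x: "a = (\<lambda>k. if k \<in> {1..M} then x \<bullet> f k else 0)" "\<forall>i\<in>S. a i = 0"
    unfolding mem_int by blast
  have "\<exists>k\<in>{1..M}. x \<bullet> f k \<noteq> 0"
  proof (rule ccontr)
    assume "\<not> ?thesis"
    then have "a = (\<lambda>_. 0)" using x(1) by auto
    thus False using a(2) by simp
  qed
  moreover have "\<forall>i\<in>S \<inter> {1..M}. x \<bullet> f i = 0" using x by auto
  ultimately show "\<exists>x. (\<exists>k\<in>{1..M}. x \<bullet> f k \<noteq> 0) \<and> (\<forall>i\<in>S \<inter> {1..M}. x \<bullet> f i = 0)" by blast
next
  assume "\<exists>x. (\<exists>k\<in>{1..M}. x \<bullet> f k \<noteq> 0) \<and> (\<forall>i\<in>S \<inter> {1..M}. x \<bullet> f i = 0)"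
  then obtain x k where x: "k \<in> {1..M}" "x \<bullet> f k \<noteq> 0" "\<forall>i\<in>S \<inter> {1..M}. x \<bullet> f i = 0" by blast
  let ?a = "(\<lambda>k. if k \<in> {1..M} then x \<bullet> f k else 0)"
  have "?a \<in> coeff_range f M \<inter> L_set M S" unfolding mem_int using x(3) by auto
  moreover have "?a \<noteq> (\<lambda>_. 0)"
  proof
    assume "?a = (\<lambda>_. 0)"
    then have "?a k = 0" by (rule fun_cong)
    moreover have "?a k = x \<bullet> f k" using x(1) by (rule if_P)
    ultimately show False using x(2) by simp
  qed
  ultimately show "coeff_range f M \<inter> L_set M S \<noteq> {\<lambda>_. 0}" by blast
qed

lemma l1: fixes u v :: "'b::real_vector" shows "u - v = u + v \<Longrightarrow> v = 0"
proof -
  assume a: "u - v = u + v"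
  have "(u + v) - (u - v) = v + v" by (simp add: algebra_simps)
  then have "v + v = 0" using a by simp
  then have "2 *\<^sub>R v = 0" by (simp add: scaleR_2)
  then show "v = 0" by simp
qed
lemma l2: fixes u v :: "'b::real_vector" shows "u - v = - (u + v) \<Longrightarrow> u = 0"
proof -
  assume a: "u - v = - (u + v)"
  have "(u - v) + (u + v) = u + u" by (simp add: algebra_simps)
  then have "u + u = 0" using a by simp
  then have "2 *\<^sub>R u = 0" by (simp add: scaleR_2)
  then show "u = 0" by simp
qed

lemma aux_vec:
  fixes u v :: "'b::real_vector"
  assumes "u - v = u + v \<or> u - v = - (u + v)"
  shows "v = 0 \<or> u = 0"
  using assms l1 l2 by blast

lemma aux_sq:
  fixes x y fk :: "'b::real_inner"
  assumes "\<bar>x \<bullet> fk\<bar> = \<bar>y \<bullet> fk\<bar>"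
  shows "((x+y) \<bullet> fk) * ((x-y) \<bullet> fk) = 0"
proof -
  have "(x \<bullet> fk)^2 = (y \<bullet> fk)^2" using assms by (metis power2_abs)
  then show ?thesis by (simp add: inner_add_left inner_diff_left power2_eq_square algebra_simps)
qed

theorem corollary2p4:
  fixes f :: "nat \<Rightarrow> 'a::euclidean_space" and M :: nat
  assumes "is_frame f M"
  shows "phase_retrieval_injective f M \<longleftrightarrow>
    (\<forall>S. S \<subseteq> {1..M} \<longrightarrow>
       coeff_range f M \<inter> L_set M S \<noteq> {\<lambda>_. 0} \<longrightarrow>
       coeff_range f M \<inter> L_set M ({1..M} - S) = {\<lambda>_. 0})"
proof
  assume inj: "phase_retrieval_injective f M"
  show "\<forall>S. S \<subseteq> {1..M} \<longrightarrow>
       coeff_range f M \<inter> L_set M S \<noteq> {\<lambda>_. 0} \<longrightarrow>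
       coeff_range f M \<inter> L_set M ({1..M} - S) = {\<lambda>_. 0}"
  proof (intro allI impI, rule ccontr)
    fix S assume S: "S \<subseteq> {1..M}" and h1: "coeff_range f M \<inter> L_set M S \<noteq> {\<lambda>_. 0}"
      and h2: "coeff_range f M \<inter> L_set M ({1..M} - S) \<noteq> {\<lambda>_. 0}"
    obtain u k where u: "k \<in> {1..M}" "u \<bullet> f k \<noteq> 0" "\<forall>i\<in>S \<inter> {1..M}. u \<bullet> f i = 0"
      using h1 unfolding ne_zero_iff by blast
    obtain v j where v: "j \<in> {1..M}" "v \<bullet> f j \<noteq> 0" "\<forall>i\<in>({1..M} - S) \<inter> {1..M}. v \<bullet> f i = 0"
      using h2 unfolding ne_zero_iff by blast
    have "\<forall>i\<in>{1..M}. \<bar>(u + v) \<bullet> f i\<bar> = \<bar>(u - v) \<bullet> f i\<bar>"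
    proof
      fix i assume i: "i \<in> {1..M}"
      show "\<bar>(u + v) \<bullet> f i\<bar> = \<bar>(u - v) \<bullet> f i\<bar>"
      proof (cases "i \<in> S")
        case True then show ?thesis using u(3) i by (simp add: inner_add_left inner_diff_left)
      next
        case False then show ?thesis using v(3) i by (simp add: inner_add_left inner_diff_left)
      qed
    qed
    then have "u - v = u + v \<or> u - v = - (u + v)" using inj
      unfolding phase_retrieval_injective_def by blast
    then have "v = 0 \<or> u = 0" by (rule aux_vec)
    then show False using u v by auto
  qed
next
  assume C: "\<forall>S. S \<subseteq> {1..M} \<longrightarrow>
       coeff_range f M \<inter> L_set M S \<noteq> {\<lambda>_. 0} \<longrightarrow>
       coeff_range f M \<inter> L_set M ({1..M} - S) = {\<lambda>_. 0}"
  show "phase_retrieval_injective f M"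
    unfolding phase_retrieval_injective_def
  proof (intro allI impI)
    fix x y :: 'a
    assume h: "\<forall>k\<in>{1..M}. \<bar>x \<bullet> f k\<bar> = \<bar>y \<bullet> f k\<bar>"
    define u where "u = x + y"
    define v where "v = x - y"
    define S where "S = {k \<in> {1..M}. u \<bullet> f k = 0}"
    have prod: "(u \<bullet> f k) * (v \<bullet> f k) = 0" if "k \<in> {1..M}" for k
    proof -
      have "\<bar>x \<bullet> f k\<bar> = \<bar>y \<bullet> f k\<bar>" using h that by blast
      thus ?thesis unfolding u_def v_def by (rule aux_sq)
    qed
    show "y = x \<or> y = - x"
    proof (cases "\<forall>k\<in>{1..M}. u \<bullet> f k = 0")
      case True
      then have "u = 0" by (rule frame_zero[OF assms])
      then have "x + y = 0" unfolding u_def .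
      then have "y = - x" by (metis add.commute eq_neg_iff_add_eq_0)
      then show ?thesis by (rule disjI2)
    next
      case False
      then obtain k where k: "k \<in> {1..M}" "u \<bullet> f k \<noteq> 0" by blast
      have uS: "\<forall>i\<in>S \<inter> {1..M}. u \<bullet> f i = 0" unfolding S_def by blast
      have ne: "coeff_range f M \<inter> L_set M S \<noteq> {\<lambda>_. 0}"
        unfolding ne_zero_iff using k uS by blast
      have Ssub: "S \<subseteq> {1..M}" unfolding S_def by blast
      have e: "coeff_range f M \<inter> L_set M ({1..M} - S) = {\<lambda>_. 0}"
        using C Ssub ne by blast
      have "\<forall>k\<in>{1..M}. v \<bullet> f k = 0"
      proof (rule ccontr)
        assume "\<not> ?thesis"
        moreover have "\<forall>i\<in>({1..M} - S) \<inter> {1..M}. v \<bullet> f i = 0"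
        proof
          fix i assume i: "i \<in> ({1..M} - S) \<inter> {1..M}"
          then have "u \<bullet> f i \<noteq> 0" unfolding S_def by blast
          moreover have "(u \<bullet> f i) * (v \<bullet> f i) = 0" using prod i by blast
          ultimately show "v \<bullet> f i = 0" by simp
        qed
        ultimately have "coeff_range f M \<inter> L_set M ({1..M} - S) \<noteq> {\<lambda>_. 0}"
          unfolding ne_zero_iff by blast
        thus False using e by simp
      qed
      then have "v = 0" by (rule frame_zero[OF assms])
      then show ?thesis unfolding v_def by auto
    qed
  qed
qed

end
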